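(* Let $F:[0,\infty)\to\mathbb{R}$ be $C^{1,1}$ with $F'(0)=0$ and let $\Sigma=\{(w,F(|w|)):w\in\mathbb{R}^2\}\subset\mathbb{R}^3$. Then every compact subset of $(\Sigma,d_{\mathbb{H}})$ bi-Lipschitz embeds in some Euclidean space $\mathbb{R}^n$.
   Context: For $w=(x,y,z)$, $w'=(x',y',z')$, $d_{\mathbb{H}}(w,w')=|x-x'|+|y-y'|+|z-z'+\tfrac12(xy'-x'y)|^{1/2}$. $(A,d_{\mathbb{H}})$ bi-Lipschitz embeds in $\mathbb{R}^n$ if there are $L\ge1$ and $f:A\to\mathbb{R}^n$ with $L^{-1}d_{\mathbb{H}}(a,b)\le|f(a)-f(b)|\le Ld_{\mathbb{H}}(a,b)$ for all $a,b\in A$. *)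

theory Defs
  imports "HOL-Analysis.Analysis"
begin

type_synonym heis = "real \<times> real \<times> real"

definition dH :: "heis \<Rightarrow> heis \<Rightarrow> real" where
  "dH w w' = (case w of (x, y, z) \<Rightarrow> case w' of (x', y', z') \<Rightarrow>
      \<bar>x - x'\<bar> + \<bar>y - y'\<bar> + sqrt \<bar>z - z' + (1/2) * (x * y' - x' * y)\<bar>)"

definition C11_flat_at_0 :: "(real \<Rightarrow> real) \<Rightarrow> bool" where
  "C11_flat_at_0 F \<longleftrightarrow> (\<exists>F'. (\<forall>t\<ge>0. (F has_real_derivative F' t) (at t within {0..}))
      \<and> (\<exists>K. \<forall>s\<ge>0. \<forall>t\<ge>0. \<bar>F' s - F' t\<bar> \<le> K * \<bar>s - t\<bar>)
      \<and> F' 0 = 0)"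

definition rot_graph :: "(real \<Rightarrow> real) \<Rightarrow> heis set" where
  "rot_graph F = {(x, y, F (sqrt (x\<^sup>2 + y\<^sup>2))) | x y. True}"

text \<open>Vectors of R^n are represented as functions nat => real vanishing from index n on;
  Euclidean distance is sqrt of the sum of squares over indices < n.\<close>
definition bilip_embeds_Rn :: "'a set \<Rightarrow> ('a \<Rightarrow> 'a \<Rightarrow> real) \<Rightarrow> nat \<Rightarrow> bool" where
  "bilip_embeds_Rn A d n \<longleftrightarrow> (\<exists>L::real. L \<ge> 1 \<and> (\<exists>f :: 'a \<Rightarrow> nat \<Rightarrow> real.
      (\<forall>a\<in>A. \<forall>i\<ge>n. f a i = 0) \<and>
      (\<forall>a\<in>A. \<forall>b\<in>A.
         d a b / L \<le> sqrt (\<Sum>i<n. (f a i - f b i)\<^sup>2) \<and>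
         sqrt (\<Sum>i<n. (f a i - f b i)\<^sup>2) \<le> L * d a b)))"

end

theory Submission
  imports Defs
begin

lemma sin_ge_xcos:
  fixes y :: real assumes "0 \<le> y" "y \<le> pi"
  shows "y * cos y \<le> sin y"
proof -
  have "(\<lambda>t. sin t - t * cos t) 0 \<le> (\<lambda>t. sin t - t * cos t) y"
  proof (rule DERIV_nonneg_imp_increasing_open[OF assms(1)])
    fix x assume x: "0 < x" "x < y"
    show "\<exists>d. ((\<lambda>t. sin t - t * cos t) has_real_derivative d) (at x) \<and> 0 \<le> d"
      apply (rule exI[of _ "x * sin x"])
      using x assms by (auto intro!: derivative_eq_intros mult_nonneg_nonneg sin_ge_zero)
  next
    show "continuous_on {0..y} (\<lambda>t. sin t - t * cos t)"
      by (intro continuous_intros)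
  qed
  then show ?thesis by simp
qed

lemma sin_ge_third:
  fixes y :: real assumes "0 \<le> y" "y \<le> pi/2"
  shows "y / 3 \<le> sin y"
proof (cases "y \<le> pi/3")
  case True
  have "cos (pi/3) \<le> cos y"
    by (rule cos_monotone_0_pi_le) (use assms True in auto)
  then have "1/2 \<le> cos y" by (simp add: cos_60)
  then have "y * (1/2) \<le> y * cos y" using assms by (intro mult_left_mono) auto
  then show ?thesis using sin_ge_xcos[of y] assms by auto
next
  case False
  have "sin (pi/3) \<le> sin y"
    by (rule sin_monotone_2pi_le) (use assms False in auto)
  moreover have "sqrt 3 / 2 \<ge> (2/3::real)"
  proof -
    have "(4/3::real) \<le> sqrt 3" by (rule real_le_rsqrt) (simp add: power2_eq_square)
    then show ?thesis by simp
  qed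
  moreover have "y / 3 \<le> 2/3" using assms pi_less_4 by auto
  ultimately show ?thesis by (simp add: sin_60)
qed

lemma cmod_cis_minus_one: "cmod (cis t - 1) = 2 * \<bar>sin (t/2)\<bar>"
proof -
  have "(cmod (cis t - 1))\<^sup>2 = (cos t - 1)\<^sup>2 + (sin t)\<^sup>2"
    by (simp add: cmod_power2)
  also have "\<dots> = 2 - 2 * cos t" using sin_cos_squared_add[of t] by (simp add: power2_diff)
  also have "\<dots> = (2 * \<bar>sin (t/2)\<bar>)\<^sup>2"
    using cos_double_sin[of "t/2"] by (simp add: power2_eq_square)
  finally show ?thesis
    by (rule power2_eq_imp_eq) auto
qed


definition Tb :: "nat \<Rightarrow> real \<Rightarrow> complex" where
  "Tb m a = (\<Sum>i. complex_of_real ((1/2)^(6*i+m)) * cis (4^(6*i+m) * a))"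

lemma summ_aux:
  assumes "\<And>i. cmod (z i) \<le> B"
  shows "summable (\<lambda>i. complex_of_real ((1/2)^(6*i+m)) * z i)"
proof (rule summable_comparison_test)
  show "summable (\<lambda>i. B * (1/2::real)^i)" by (intro summable_mult summable_geometric) auto
  show "\<exists>N. \<forall>n\<ge>N. norm (complex_of_real ((1/2)^(6*n+m)) * z n) \<le> B * (1/2)^n"
  proof (intro exI allI impI)
    fix n :: nat
    have "(1/2::real)^(6*n+m) \<le> (1/2)^n" by (rule power_decreasing) auto
    moreover have "0 \<le> B" using assms[of 0] norm_ge_zero[of "z 0"] by linarith
    ultimately have "(1/2::real)^(6*n+m) * cmod (z n) \<le> (1/2)^n * B"
      using assms[of n] by (intro mult_mono) auto
    then show "norm (complex_of_real ((1/2)^(6*n+m)) * z n) \<le> B * (1/2)^n"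
      by (simp add: norm_mult norm_power mult.commute)
  qed
qed

lemma summ_cis: "summable (\<lambda>i. complex_of_real ((1/2)^(6*i+m)) * cis (4^(6*i+m) * a))"
  by (rule summ_aux[where B=1]) simp

lemma Tb_bound: "cmod (Tb m a) \<le> 2"
proof -
  have "cmod (Tb m a) \<le> (\<Sum>i. (1/2::real)^i)"
    unfolding Tb_def
  proof (rule norm_suminf_le)
    fix n
    have "(1/2::real)^(6*n+m) \<le> (1/2)^n" by (rule power_decreasing) auto
    then show "norm (complex_of_real ((1/2)^(6*n+m)) * cis (4^(6*n+m) * a)) \<le> (1/2)^n"
      by (simp add: norm_mult norm_power)
  qed (rule summable_geometric, simp)
  also have "\<dots> = 2" using suminf_geometric[of "1/2::real"] by simp
  finally show ?thesis .
qed

definition ud :: "nat \<Rightarrow> real \<Rightarrow> real \<Rightarrow> nat \<Rightarrow> complex" where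
  "ud m a b i = complex_of_real ((1/2)^(6*i+m)) * (cis (4^(6*i+m) * a) - cis (4^(6*i+m) * b))"

lemma summ_ud: "summable (ud m a b)"
  unfolding ud_def by (rule summ_aux[where B=2]) (simp add: norm_triangle_ineq4[THEN order_trans])

lemma Tb_diff: "Tb m a - Tb m b = suminf (ud m a b)"
  unfolding Tb_def ud_def
  by (subst suminf_diff[OF summ_cis summ_cis]) (simp add: right_diff_distrib)

lemma reduce_angle:
  "\<exists>x. 0 \<le> x \<and> x \<le> pi \<and> (\<forall>n::nat. cmod (cis (real n * a) - cis (real n * b)) = 2 * \<bar>sin (real n * x / 2)\<bar>)"
proof -
  obtain y where y: "- pi < y" "y \<le> pi" "sin y = sin (a - b)" "cos y = cos (a - b)"
    using sincos_principal_value[of "a - b"] by blast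
  have cy: "cis y = cis (a - b)" using y by (simp add: complex_eq_iff)
  show ?thesis
  proof (intro exI conjI allI)
    show "0 \<le> \<bar>y\<bar>" "\<bar>y\<bar> \<le> pi" using y by auto
    fix n :: nat
    have "cis (real n * a) = cis (real n * b) * cis (real n * (a - b))"
      by (simp add: cis_mult algebra_simps)
    also have "cis (real n * (a - b)) = cis (real n * y)"
      using Complex.DeMoivre[of y n] Complex.DeMoivre[of "a-b" n] cy by simp
    finally have "cmod (cis (real n * a) - cis (real n * b)) = cmod (cis (real n * b) * (cis (real n * y) - 1))"
      by (simp add: algebra_simps)
    also have "\<dots> = cmod (cis (real n * y) - 1)" by (simp add: norm_mult)
    also have "\<dots> = 2 * \<bar>sin (real n * y / 2)\<bar>" by (simp add: cmod_cis_minus_one)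
    also have "\<dots> = 2 * \<bar>sin (real n * \<bar>y\<bar> / 2)\<bar>"
      by (cases "y \<ge> 0") auto
    finally show "cmod (cis (real n * a) - cis (real n * b)) = 2 * \<bar>sin (real n * \<bar>y\<bar> / 2)\<bar>" .
  qed
qed


lemma geo_head: "(\<Sum>i<n. (2::real)^(6*i+m)) \<le> 2^(6*n+m) / 63"
proof (induction n)
  case (Suc n)
  have "(2::real)^(6*Suc n+m) = 64 * 2^(6*n+m)" by (simp add: power_add)
  then show ?case using Suc by simp
qed simp

lemma pw64: "((1/2::real)^i)^6 = (1/64)^i"
proof -
  have "((1/2::real)^i)^6 = ((1/2)^6)^i" by (simp only: power_mult[symmetric] mult.commute)
  moreover have "(1/2::real)^6 = 1/64" by (simp add: power_divide)
  ultimately show ?thesis by simp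
qed

lemma geo_tail: "(\<Sum>i. 2 * (1/2::real)^(6*(i+n)+m)) = 2 * (1/2)^(6*n+m) * (64/63)"
proof -
  have e: "\<And>i. 2 * (1/2::real)^(6*(i+n)+m) = (2 * (1/2)^(6*n+m)) * (1/64)^i"
    by (simp add: power_add power_mult pw64 algebra_simps)
  have "(\<Sum>i. (1/64::real)^i) = 64/63" using suminf_geometric[of "1/64::real"] by simp
  then show ?thesis unfolding e
    by (subst suminf_mult) (auto intro: summable_geometric)
qed

lemma summ_tail: "summable (\<lambda>i. 2 * (1/2::real)^(6*(i+n)+m))"
proof -
  have e: "\<And>i. 2 * (1/2::real)^(6*(i+n)+m) = (2 * (1/2)^(6*n+m)) * (1/64)^i"
    by (simp add: power_add power_mult pw64 algebra_simps)
  show ?thesis unfolding e by (intro summable_mult summable_geometric) auto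
qed

context
  fixes a b x :: real
  assumes hs: "\<And>k::nat. cmod (cis (4^k * a) - cis (4^k * b)) = 2 * \<bar>sin (4^k * x / 2)\<bar>"
    and x0: "0 \<le> x" and xpi: "x \<le> pi"
begin

lemma norm_ud: "norm (ud m a b i) = (1/2)^(6*i+m) * (2 * \<bar>sin (4^(6*i+m) * x / 2)\<bar>)"
  unfolding ud_def using hs[of "6*i+m"] by (simp add: norm_mult norm_power)

lemma nu1: "norm (ud m a b i) \<le> 2^(6*i+m) * x"
proof -
  have "2 * \<bar>sin (4^(6*i+m) * x / 2)\<bar> \<le> 4^(6*i+m) * x"
    using abs_sin_x_le_abs_x[of "4^(6*i+m) * x / 2"] x0 by simp
  then have "(1/2::real)^(6*i+m) * (2 * \<bar>sin (4^(6*i+m) * x / 2)\<bar>) \<le> (1/2)^(6*i+m) * (4^(6*i+m) * x)"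
    by (intro mult_left_mono) auto
  also have "\<dots> = 2^(6*i+m) * x"
  proof -
    have "(1/2::real)^(6*i+m) * 4^(6*i+m) = 2^(6*i+m)"
      by (simp add: power_mult_distrib[symmetric])
    then show ?thesis by (simp add: algebra_simps)
  qed
  finally show ?thesis by (simp add: norm_ud)
qed

lemma nu2: "norm (ud m a b i) \<le> 2 * (1/2)^(6*i+m)"
  unfolding norm_ud by simp

lemma block_upper: "cmod (Tb m a - Tb m b) \<le> 5 * sqrt x"
proof (cases "x = 0")
  case True
  then have "\<And>i. norm (ud m a b i) = 0" by (simp add: norm_ud)
  then have "ud m a b = (\<lambda>i. 0)" by (intro ext) simp
  then show ?thesis using x0 by (simp add: Tb_diff)
next
  case False
  then have xp: "0 < x" using x0 by simp
  define P where "P = (\<lambda>J::nat. 1 \<le> 4^(6*J+m) * x)"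
  have exP: "\<exists>J. P J"
  proof -
    obtain n :: nat where n: "1 / x < real n" using reals_Archimedean2 by blast
    have "real n \<le> 4^(6*n+m)"
    proof -
      have "real n < 2^n" using less_exp[of n] by simp
      also have "(2::real)^n \<le> 4^(6*n+m)"
        by (rule order_trans[of _ "4^n"]) (auto intro: power_mono power_increasing)
      finally show ?thesis by simp
    qed
    then have "1/x < 4^(6*n+m)" using n by linarith
    then have "1 < 4^(6*n+m) * x" using xp by (simp add: field_simps)
    then show ?thesis unfolding P_def by (auto intro: less_imp_le)
  qed
  define J where "J = (LEAST J. P J)"
  have PJ: "P J" unfolding J_def using exP by (metis LeastI)
  have notP: "\<And>i. i < J \<Longrightarrow> \<not> P i" unfolding J_def using not_less_Least by blast
  define p :: real where "p = 2^(6*J+m)"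
  have pp: "0 < p" unfolding p_def by simp
  have p4: "4^(6*J+m) = p^2" unfolding p_def by (simp add: power2_eq_square power_mult_distrib[symmetric])
  have sx: "sqrt x * sqrt x = x" using x0 by simp
  have ps1: "1 \<le> p * sqrt x"
  proof -
    have "1 \<le> p^2 * x" using PJ p4 unfolding P_def by simp
    then have "1 \<le> (p * sqrt x)^2" using x0 by (simp add: power_mult_distrib)
    then show ?thesis using power2_le_imp_le[of 1 "p * sqrt x"] pp x0 by simp
  qed
  have summ: "summable (ud m a b)" by (rule summ_ud)
  have split: "suminf (ud m a b) = (\<Sum>i. ud m a b (i + J)) + (\<Sum>i<J. ud m a b i)"
    by (rule suminf_split_initial_segment[OF summ])
  have tail: "norm (\<Sum>i. ud m a b (i + J)) \<le> 2 * (1/p) * (64/63)"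
  proof -
    have "norm (\<Sum>i. ud m a b (i + J)) \<le> (\<Sum>i. 2 * (1/2::real)^(6*(i+J)+m))"
      by (rule norm_suminf_le[OF _ summ_tail]) (rule nu2)
    also have "\<dots> = 2 * (1/p) * (64/63)" unfolding geo_tail p_def by (simp add: power_one_over)
    finally show ?thesis .
  qed
  have head: "norm (\<Sum>i<J. ud m a b i) \<le> 2 * sqrt x"
  proof (cases "J = 0")
    case True then show ?thesis using x0 by simp
  next
    case False
    then obtain J' where J': "J = Suc J'" by (cases J) auto
    have nP: "4^(6*J'+m) * x < 1" using notP[of J'] J' unfolding P_def by simp
    have "4^(6*J+m) = (4::real)^6 * 4^(6*J'+m)" unfolding J' by (simp add: power_add)
    then have "p^2 * x < 4^6" using nP p4 by simp
    then have "(p * sqrt x)^2 < 64^2" using x0 by (simp add: power_mult_distrib)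
    then have psx: "p * sqrt x < 64" by (rule power2_less_imp_less) simp
    have "norm (\<Sum>i<J. ud m a b i) \<le> (\<Sum>i<J. 2^(6*i+m) * x)"
      by (rule order_trans[OF norm_sum sum_mono]) (rule nu1)
    also have "\<dots> = (\<Sum>i<J. 2^(6*i+m)) * x" by (simp add: sum_distrib_right)
    also have "\<dots> \<le> p / 63 * x" unfolding p_def using x0 by (intro mult_right_mono geo_head) auto
    also have "\<dots> = (p * sqrt x) * sqrt x / 63" using sx by (simp add: algebra_simps)
    also have "\<dots> \<le> 64 * sqrt x / 63" using psx x0 by (intro divide_right_mono mult_right_mono) auto
    also have "\<dots> \<le> 2 * sqrt x" using x0 by simp
    finally show ?thesis .
  qed
  have "1/p \<le> sqrt x" using ps1 pp by (simp add: field_simps)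
  then have "(128/63) * (1/p) \<le> (128/63) * sqrt x" by (rule mult_left_mono) simp
  have "2 * (1/p) * (64/63) = (128/63) * (1/p)" by simp
  also have "\<dots> \<le> (128/63) * sqrt x" by fact
  also have "(128/63) * sqrt x \<le> 3 * sqrt x" using x0 by simp
  finally have "2 * (1/p) * (64/63) \<le> 3 * sqrt x" .
  then show ?thesis unfolding Tb_diff split
    using tail head norm_triangle_ineq[of "\<Sum>i. ud m a b (i + J)" "\<Sum>i<J. ud m a b i"] by simp
qed

end

context
  fixes a b x :: real
  assumes hs: "\<And>k::nat. cmod (cis (4^k * a) - cis (4^k * b)) = 2 * \<bar>sin (4^k * x / 2)\<bar>"
    and x0: "0 \<le> x" and xpi: "x \<le> pi"
begin

lemma norm_tri3: "norm (c::complex) - norm p - norm q \<le> norm (p + q + c)"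
proof -
  have "norm c = norm ((p + q + c) - p - q)" by simp
  also have "\<dots> \<le> norm (p + q + c) + norm p + norm q"
    using norm_triangle_ineq4[of "p + q + c - p" q] norm_triangle_ineq4[of "p + q + c" p] by simp
  finally show ?thesis by simp
qed

lemma block_lower:
  assumes j1: "pi/4 < 4^j * x" and j2: "4^j * x \<le> pi"
  shows "(1/2)^j / 7 \<le> cmod (Tb (j mod 6) a - Tb (j mod 6) b)"
proof -
  define m where "m = j mod 6"
  define i0 where "i0 = j div 6"
  have j: "j = 6*i0+m" unfolding m_def i0_def by simp
  define q :: real where "q = (1/2)^j"
  have q0: "0 < q" unfolding q_def by simp
  have summ: "summable (ud m a b)" by (rule summ_ud)
  have split: "suminf (ud m a b) = (\<Sum>i. ud m a b (i + Suc i0)) + ((\<Sum>i<i0. ud m a b i) + ud m a b i0)"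
    using suminf_split_initial_segment[OF summ, of "Suc i0"] by simp
  have main: "q * (pi/12) \<le> norm (ud m a b i0)"
  proof -
    have "0 \<le> 4^j * x / 2" "4^j * x / 2 \<le> pi/2" using j2 x0 by auto
    then have "(4^j * x / 2) / 3 \<le> sin (4^j * x / 2)" by (rule sin_ge_third)
    then have "pi/12 \<le> 2 * \<bar>sin (4^j * x / 2)\<bar>" using j1 by linarith
    then have "q * (pi/12) \<le> q * (2 * \<bar>sin (4^j * x / 2)\<bar>)" using q0 by (intro mult_left_mono) auto
    moreover have "norm (ud m a b i0) = q * (2 * \<bar>sin (4^j * x / 2)\<bar>)"
      using norm_ud[OF hs x0 xpi, of m i0] unfolding q_def by (simp add: j)
    ultimately show ?thesis by simp
  qed
  have head: "norm (\<Sum>i<i0. ud m a b i) \<le> q * (pi / 63)"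
  proof -
    have "norm (\<Sum>i<i0. ud m a b i) \<le> (\<Sum>i<i0. 2^(6*i+m) * x)"
      by (rule order_trans[OF norm_sum sum_mono]) (rule nu1[OF hs x0 xpi])
    also have "\<dots> = (\<Sum>i<i0. 2^(6*i+m)) * x" by (simp add: sum_distrib_right)
    also have "\<dots> \<le> 2^(6*i0+m) / 63 * x" using x0 by (rule mult_right_mono[OF geo_head])
    also have "\<dots> = q * (4^j * x) / 63"
    proof -
      have "(2::real)^j = q * 4^j" unfolding q_def by (simp add: power_mult_distrib[symmetric])
      then show ?thesis unfolding j[symmetric] by simp
    qed
    also have "\<dots> \<le> q * pi / 63" using j2 q0 by (intro divide_right_mono mult_left_mono) auto
    finally show ?thesis by simp
  qed
  have tail: "norm (\<Sum>i. ud m a b (i + Suc i0)) \<le> q * (2/63)"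
  proof -
    have "norm (\<Sum>i. ud m a b (i + Suc i0)) \<le> (\<Sum>i. 2 * (1/2::real)^(6*(i+Suc i0)+m))"
      by (rule norm_suminf_le[OF _ summ_tail]) (rule nu2[OF hs x0 xpi])
    also have "\<dots> = 2 * (1/2)^(6*Suc i0+m) * (64/63)" by (rule geo_tail)
    also have "(1/2::real)^(6*Suc i0+m) = q / 64"
      unfolding q_def j by (simp add: power_add power_divide)
    finally show ?thesis by simp
  qed
  have "norm (ud m a b i0) - norm (\<Sum>i. ud m a b (i + Suc i0)) - norm (\<Sum>i<i0. ud m a b i)
      \<le> norm (Tb m a - Tb m b)"
    unfolding Tb_diff split using norm_tri3[of "ud m a b i0" "\<Sum>i. ud m a b (i + Suc i0)" "\<Sum>i<i0. ud m a b i"]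
    by (simp add: add.assoc)
  moreover have "q / 7 \<le> q * (pi/12) - q * (2/63) - q * (pi / 63)"
  proof -
    have "1/7 \<le> pi/12 - 2/63 - pi/63" using pi_gt3 by simp
    then have "q * (1/7) \<le> q * (pi/12 - 2/63 - pi/63)" using q0 by (intro mult_left_mono) auto
    then show ?thesis by (simp add: algebra_simps)
  qed
  ultimately show ?thesis using main head tail unfolding q_def m_def by linarith
qed

lemma snow_lower: "cmod (cis a - cis b) / 196 \<le> (\<Sum>m<6. (cmod (Tb m a - Tb m b))\<^sup>2)"
proof (cases "x = 0")
  case True
  then show ?thesis using hs[of 0] by (simp add: sum_nonneg)
next
  case False
  then have xp: "0 < x" using x0 by simp
  define P where "P = (\<lambda>j::nat. pi/4 < 4^j * x)"
  have exP: "\<exists>j. P j"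
  proof -
    obtain n :: nat where n: "pi / x < real n" using reals_Archimedean2 by blast
    have "real n < 2^n" using less_exp[of n] by simp
    also have "(2::real)^n \<le> 4^n" by (rule power_mono) auto
    finally have "pi/x < 4^n" using n by linarith
    then have "pi < 4^n * x" using xp by (simp add: field_simps)
    then show ?thesis unfolding P_def using pi_gt_zero by (intro exI[of _ n]) linarith
  qed
  define j where "j = (LEAST j. P j)"
  have Pj: "P j" unfolding j_def using exP by (metis LeastI)
  have j2: "4^j * x \<le> pi"
  proof (cases j)
    case 0 then show ?thesis using xpi by simp
  next
    case (Suc j')
    have "\<not> P j'" unfolding j_def using not_less_Least[of j' P] Suc j_def by simp
    then have "4^j' * x \<le> pi/4" unfolding P_def by simp
    then show ?thesis unfolding Suc by simp
  qed
  have bl: "(1/2)^j / 7 \<le> cmod (Tb (j mod 6) a - Tb (j mod 6) b)"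
    by (rule block_lower) (use Pj j2 P_def in auto)
  have "((1/2::real)^j / 7)\<^sup>2 \<le> (cmod (Tb (j mod 6) a - Tb (j mod 6) b))\<^sup>2"
    using bl by (intro power_mono) auto
  also have "\<dots> \<le> (\<Sum>m<6. (cmod (Tb m a - Tb m b))\<^sup>2)"
    by (rule member_le_sum) auto
  finally have s1: "((1/2::real)^j / 7)\<^sup>2 \<le> (\<Sum>m<6. (cmod (Tb m a - Tb m b))\<^sup>2)" .
  have e4: "((1/2::real)^j / 7)\<^sup>2 = (1/4)^j / 49"
    by (simp add: power2_eq_square power_mult_distrib[symmetric])
  have xq: "x / pi \<le> (1/4::real)^j"
  proof -
    have "x \<le> pi * (1/4)^j" using j2 by (simp add: field_simps)
    then show ?thesis using pi_gt_zero by (simp add: field_simps)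
  qed
  have cx: "cmod (cis a - cis b) \<le> x"
    using hs[of 0] abs_sin_x_le_abs_x[of "x/2"] x0 by simp
  have "cmod (cis a - cis b) / 196 \<le> x / 196" using cx by simp
  also have "x / 196 \<le> x / (pi * 49)" using pi_less_4 x0 by (intro divide_left_mono) auto
  also have "\<dots> = (x / pi) / 49" by simp
  also have "\<dots> \<le> (1/4)^j / 49" using xq by simp
  also have "\<dots> \<le> (\<Sum>m<6. (cmod (Tb m a - Tb m b))\<^sup>2)" using s1 e4 by simp
  finally show ?thesis .
qed

lemma snow_upper: "(\<Sum>m<6. (cmod (Tb m a - Tb m b))\<^sup>2) \<le> 450 * cmod (cis a - cis b)"
proof -
  have "\<And>m. (cmod (Tb m a - Tb m b))\<^sup>2 \<le> 25 * x"
  proof -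
    fix m
    have "(cmod (Tb m a - Tb m b))\<^sup>2 \<le> (5 * sqrt x)\<^sup>2"
      by (rule power_mono[OF block_upper[OF hs x0 xpi]]) simp
    then show "(cmod (Tb m a - Tb m b))\<^sup>2 \<le> 25 * x" using x0 by (simp add: power_mult_distrib)
  qed
  then have "(\<Sum>m<6. (cmod (Tb m a - Tb m b))\<^sup>2) \<le> (\<Sum>m<(6::nat). 25 * x)"
    by (intro sum_mono)
  also have "\<dots> = 150 * x" by simp
  also have "x \<le> 3 * cmod (cis a - cis b)"
  proof -
    have "x/2/3 \<le> sin (x/2)" by (rule sin_ge_third) (use x0 xpi in auto)
    then show ?thesis using hs[of 0] by simp
  qed
  finally show ?thesis by simp
qed

end

theorem snowflake:
  shows "(\<Sum>m<6. (cmod (Tb m a - Tb m b))\<^sup>2) \<le> 450 * cmod (cis a - cis b)"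
    and "cmod (cis a - cis b) / 196 \<le> (\<Sum>m<6. (cmod (Tb m a - Tb m b))\<^sup>2)"
proof -
  obtain x where x: "0 \<le> x" "x \<le> pi"
    and h: "\<And>n::nat. cmod (cis (real n * a) - cis (real n * b)) = 2 * \<bar>sin (real n * x / 2)\<bar>"
    using reduce_angle[of a b] by blast
  have hs: "\<And>k::nat. cmod (cis (4^k * a) - cis (4^k * b)) = 2 * \<bar>sin (4^k * x / 2)\<bar>"
    using h[of "4^_"] by simp
  show "(\<Sum>m<6. (cmod (Tb m a - Tb m b))\<^sup>2) \<le> 450 * cmod (cis a - cis b)"
    by (rule snow_upper[OF hs x])
  show "cmod (cis a - cis b) / 196 \<le> (\<Sum>m<6. (cmod (Tb m a - Tb m b))\<^sup>2)"
    by (rule snow_lower[OF hs x])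
qed


definition phi_of :: "(real \<Rightarrow> real) \<Rightarrow> real \<Rightarrow> real" where
  "phi_of F' t = 2 * F' t / t\<^sup>2"

definition psi_of :: "(real \<Rightarrow> real) \<Rightarrow> real \<Rightarrow> real" where
  "psi_of F' t = integral {1..t} (phi_of F') - integral {t..1} (phi_of F')"

locale Fset =
  fixes F F' :: "real \<Rightarrow> real" and K :: real
  assumes K1: "1 \<le> K"
    and Fd: "\<And>t. 0 \<le> t \<Longrightarrow> (F has_real_derivative F' t) (at t within {0..})"
    and FL: "\<And>s t. 0 \<le> s \<Longrightarrow> 0 \<le> t \<Longrightarrow> \<bar>F' s - F' t\<bar> \<le> K * \<bar>s - t\<bar>"
    and F0: "F' 0 = 0"
begin

lemma F'_bound: "0 \<le> t \<Longrightarrow> \<bar>F' t\<bar> \<le> K * t"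
  using FL[of t 0] F0 by simp

lemma F'_cont: "continuous_on {0..} F'"
proof (rule lipschitz_on_continuous_on)
  show "K-lipschitz_on {0..} F'"
    by (rule lipschitz_onI) (use FL K1 in \<open>auto simp: dist_real_def\<close>)
qed

lemma F_cont: "continuous_on {0..} F"
  by (rule DERIV_continuous_on[OF Fd]) simp

lemma F_deriv_at: "0 < t \<Longrightarrow> (F has_real_derivative F' t) (at t)"
proof -
  assume t: "0 < t"
  have "at t within {0..} = at t" by (rule at_within_interior) (use t in simp)
  then show ?thesis using Fd[of t] t by simp
qed

lemma phi_cont: "0 < a \<Longrightarrow> continuous_on {a..b} (phi_of F')"
  unfolding phi_of_def
  by (intro continuous_intros continuous_on_subset[OF F'_cont]) auto

lemma psi_deriv: "0 < t \<Longrightarrow> (psi_of F' has_real_derivative phi_of F' t) (at t)"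
proof -
  assume t: "0 < t"
  define a where "a = min t 1 / 2"
  define b where "b = max t 1 + 1"
  have a0: "0 < a" "a < t" "a < 1" using t unfolding a_def by auto
  have bt: "t < b" "1 < b" unfolding b_def by auto
  have cont: "continuous_on {a..b} (phi_of F')" by (rule phi_cont) (use a0 in simp)
  have int: "\<And>c d. a \<le> c \<Longrightarrow> d \<le> b \<Longrightarrow> (phi_of F') integrable_on {c..d}"
    by (rule integrable_continuous_interval) (rule continuous_on_subset[OF cont], auto)
  define g where "g = (\<lambda>s. integral {a..s} (phi_of F') - integral {a..1} (phi_of F'))"
  have eq: "\<And>s. s \<in> {a<..<b} \<Longrightarrow> g s = psi_of F' s"
  proof -
    fix s assume s: "s \<in> {a<..<b}"
    show "g s = psi_of F' s"
    proof (cases "1 \<le> s")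
      case True
      have "integral {a..1} (phi_of F') + integral {1..s} (phi_of F') = integral {a..s} (phi_of F')"
        by (rule Henstock_Kurzweil_Integration.integral_combine) (use True a0 s int in auto)
      moreover have "integral {s..1} (phi_of F') = 0"
      proof (cases "s = 1")
        case False then have "{s..1} = {}" using True by auto
        then show ?thesis by simp
      qed simp
      ultimately show ?thesis unfolding g_def psi_of_def by simp
    next
      case False
      have "integral {a..s} (phi_of F') + integral {s..1} (phi_of F') = integral {a..1} (phi_of F')"
        by (rule Henstock_Kurzweil_Integration.integral_combine) (use False a0 s bt int in auto)
      moreover have "{1..s} = {}" using False by auto
      ultimately show ?thesis unfolding g_def psi_of_def by simp
    qed
  qed
  have d1: "((\<lambda>s. integral {a..s} (phi_of F')) has_real_derivative phi_of F' t) (at t within {a..b})"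
    by (rule integral_has_real_derivative[OF cont]) (use a0 bt in auto)
  have "(g has_real_derivative phi_of F' t - 0) (at t within {a..b})"
    unfolding g_def by (rule DERIV_diff[OF d1 DERIV_const])
  then have "(g has_real_derivative phi_of F' t) (at t within {a..b})" by simp
  then have "(g has_real_derivative phi_of F' t) (at t)"
    using at_within_Icc_at[of a t b] a0 bt by simp
  then show ?thesis
    by (rule has_field_derivative_transform_within_open[where S="{a<..<b}"]) (use eq a0 bt in auto)
qed

lemma psi_lip:
  assumes r: "0 < r" "r \<le> s"
  shows "\<bar>psi_of F' s - psi_of F' r\<bar> \<le> 2 * K * (s - r) / r"
proof (cases "r = s")
  case False
  then have rs: "r < s" using r by simp
  obtain z where z: "r < z" "z < s" "psi_of F' s - psi_of F' r = (s - r) * phi_of F' z"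
    using MVT2[OF rs, of "psi_of F'" "phi_of F'"] psi_deriv r by force
  have "\<bar>phi_of F' z\<bar> = 2 * \<bar>F' z\<bar> / z\<^sup>2" unfolding phi_of_def by (simp add: abs_mult)
  also have "\<dots> \<le> 2 * (K * z) / z\<^sup>2"
    using F'_bound[of z] z r by (simp add: divide_right_mono)
  also have "\<dots> = 2 * K / z" using z r by (simp add: power2_eq_square)
  also have "\<dots> \<le> 2 * K / r" using z r K1 by (simp add: divide_left_mono)
  finally have "\<bar>phi_of F' z\<bar> \<le> 2 * K / r" .
  then have "(s - r) * \<bar>phi_of F' z\<bar> \<le> (s - r) * (2 * K / r)" using rs by (intro mult_left_mono) auto
  also have "(s - r) * (2 * K / r) = 2 * K * (s - r) / r" by simp
  finally show ?thesis using z rs by (simp add: abs_mult)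
qed simp

lemma F_lip:
  assumes r: "0 \<le> r" "r \<le> s"
  shows "\<bar>F s - F r\<bar> \<le> K * s * (s - r)"
proof (cases "r = s")
  case False
  then have rs: "r < s" using r by simp
  have "continuous_on {r..s} F" by (rule continuous_on_subset[OF F_cont]) (use r in auto)
  moreover have "\<And>x. r < x \<Longrightarrow> x < s \<Longrightarrow> F differentiable (at x)"
  proof -
    fix x assume "r < x" "x < s"
    then have "0 < x" using r by simp
    then show "F differentiable (at x)" unfolding real_differentiable_def using F_deriv_at by blast
  qed
  ultimately obtain l z where z: "r < z" "z < s" "DERIV F z :> l" "F s - F r = (s - r) * l"
    using MVT[OF rs] by blast
  have "0 < z" using z r by simp
  have "l = F' z" by (rule DERIV_unique[OF z(3) F_deriv_at[OF \<open>0 < z\<close>]])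
  have "K * z \<le> K * s" using z K1 by simp
  then have "\<bar>l\<bar> \<le> K * s" using F'_bound[of z] z r \<open>l = F' z\<close> by simp
  then have ll: "(s - r) * \<bar>l\<bar> \<le> (s - r) * (K * s)" using rs by (intro mult_left_mono) auto
  have "\<bar>F s - F r\<bar> = (s - r) * \<bar>l\<bar>" using z(4) rs by (simp add: abs_mult)
  also have "\<dots> \<le> (s - r) * (K * s)" by (rule ll)
  also have "\<dots> = K * s * (s - r)" by (simp add: algebra_simps)
  finally show ?thesis .
qed simp

end

lemma one_minus_cos_le: "1 - cos (x::real) \<le> x\<^sup>2 / 2"
proof -
  have "1 - cos x = 2 * (sin (x/2))\<^sup>2" using cos_double_sin[of "x/2"] by simp
  also have "(sin (x/2))\<^sup>2 \<le> (x/2)\<^sup>2"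
    using abs_sin_x_le_abs_x[of "x/2"] by (metis abs_ge_zero power2_abs power_mono)
  finally show ?thesis by (simp add: power_divide)
qed

context Fset begin

abbreviation "psi \<equiv> psi_of F'"

definition Hf :: "real \<Rightarrow> real \<Rightarrow> real" where
  "Hf r t = F t - F r - r * t / 2 * sin (psi t - psi r)"

lemma Hf_deriv:
  assumes "0 < t"
  shows "(Hf r has_real_derivative
     (F' t - (r / 2 * sin (psi t - psi r) + r * t / 2 * (cos (psi t - psi r) * phi_of F' t)))) (at t)"
  unfolding Hf_def
  by (rule derivative_eq_intros F_deriv_at psi_deriv refl | use assms in simp)+

lemma Hprime_bound:
  assumes r: "0 < r" "r < z" "z \<le> 2 * r"
  shows "\<bar>F' z - (r / 2 * sin (psi z - psi r) + r * z / 2 * (cos (psi z - psi r) * phi_of F' z))\<bar>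
         \<le> (2 * K + 2 * K^3) * (z - r)"
proof -
  define \<beta> where "\<beta> = psi z - psi r"
  define A where "A = F' z"
  define d where "d = z - r"
  have z0: "0 < z" using r by simp
  have d0: "0 \<le> d" "d \<le> r" using r unfolding d_def by auto
  have bb: "\<bar>\<beta>\<bar> \<le> 2 * K * d / r" unfolding \<beta>_def d_def by (rule psi_lip) (use r in auto)
  have Ab: "\<bar>A\<bar> \<le> K * z" unfolding A_def by (rule F'_bound) (use z0 in simp)
  have eq: "F' z - (r / 2 * sin \<beta> + r * z / 2 * (cos \<beta> * phi_of F' z))
      = A * (d / z + (r / z) * (1 - cos \<beta>)) - r / 2 * sin \<beta>"
    unfolding A_def d_def phi_of_def using z0 by (simp add: field_simps power2_eq_square)
  have c1: "0 \<le> 1 - cos \<beta>" by simp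
  have c2: "1 - cos \<beta> \<le> \<beta>\<^sup>2 / 2" by (rule one_minus_cos_le)
  have b2: "\<beta>\<^sup>2 \<le> (2 * K * d / r)\<^sup>2" using bb by (metis abs_ge_zero power2_abs power_mono)
  have t1: "\<bar>A * (d / z + (r / z) * (1 - cos \<beta>))\<bar> \<le> K * d + 2 * K^3 * d"
  proof -
    have nn: "0 \<le> d / z + (r / z) * (1 - cos \<beta>)" using d0 z0 r c1 by simp
    have "\<bar>A * (d / z + (r / z) * (1 - cos \<beta>))\<bar> = \<bar>A\<bar> * (d / z + (r / z) * (1 - cos \<beta>))"
      using nn by (simp add: abs_mult)
    also have "\<dots> \<le> (K * z) * (d / z + (r / z) * (1 - cos \<beta>))"
      using Ab nn by (rule mult_right_mono)
    also have "\<dots> = K * d + K * r * (1 - cos \<beta>)" using z0 by (simp add: field_simps)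
    also have "K * r * (1 - cos \<beta>) \<le> K * r * ((2 * K * d / r)\<^sup>2 / 2)"
      using c2 b2 K1 r by (intro mult_left_mono) auto
    also have "K * r * ((2 * K * d / r)\<^sup>2 / 2) = 2 * K^3 * d * (d / r)"
      using r by (simp add: power2_eq_square power3_eq_cube field_simps)
    also have "\<dots> \<le> 2 * K^3 * d * 1"
      using d0 r K1 by (intro mult_left_mono) auto
    finally show ?thesis by simp
  qed
  have t2: "\<bar>r / 2 * sin \<beta>\<bar> \<le> K * d"
  proof -
    have "\<bar>r / 2 * sin \<beta>\<bar> = r / 2 * \<bar>sin \<beta>\<bar>" using r by (simp add: abs_mult)
    also have "\<dots> \<le> r / 2 * (2 * K * d / r)"
      using abs_sin_x_le_abs_x[of \<beta>] bb r by (intro mult_left_mono) auto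
    also have "\<dots> = K * d" using r by simp
    finally show ?thesis .
  qed
  have "K * d + 2 * K^3 * d + K * d = (2 * K + 2 * K^3) * (z - r)" unfolding d_def by (simp add: algebra_simps)
  then show ?thesis unfolding \<beta>_def[symmetric] eq using t1 t2 by linarith
qed

lemma E1_bound:
  assumes r: "0 < r" "r \<le> s" "s \<le> 2 * r"
  shows "\<bar>F r - F s + r * s / 2 * sin (psi s - psi r)\<bar> \<le> (2 * K + 2 * K^3) * (s - r)\<^sup>2"
proof (cases "r = s")
  case False
  then have rs: "r < s" using r by simp
  obtain z where z: "r < z" "z < s"
    "Hf r s - Hf r r = (s - r) * (F' z - (r / 2 * sin (psi z - psi r) + r * z / 2 * (cos (psi z - psi r) * phi_of F' z)))"
    using MVT2[OF rs, of "Hf r" "\<lambda>t. F' t - (r / 2 * sin (psi t - psi r) + r * t / 2 * (cos (psi t - psi r) * phi_of F' t))"]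
      Hf_deriv r by fastforce
  have hb: "\<bar>F' z - (r / 2 * sin (psi z - psi r) + r * z / 2 * (cos (psi z - psi r) * phi_of F' z))\<bar>
         \<le> (2 * K + 2 * K^3) * (z - r)" by (rule Hprime_bound) (use z r in auto)
  have "(2 * K + 2 * K^3) * (z - r) \<le> (2 * K + 2 * K^3) * (s - r)"
    using z K1 by (intro mult_left_mono) auto
  with hb have hb2: "\<bar>F' z - (r / 2 * sin (psi z - psi r) + r * z / 2 * (cos (psi z - psi r) * phi_of F' z))\<bar>
         \<le> (2 * K + 2 * K^3) * (s - r)" by linarith
  have "Hf r r = 0" unfolding Hf_def by simp
  define X where "X = F' z - (r / 2 * sin (psi z - psi r) + r * z / 2 * (cos (psi z - psi r) * phi_of F' z))"
  have w: "F r - F s + r * s / 2 * sin (psi s - psi r) = - ((s - r) * X)"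
    using z(3) \<open>Hf r r = 0\<close> unfolding Hf_def X_def by linarith
  have "\<bar>F r - F s + r * s / 2 * sin (psi s - psi r)\<bar> = (s - r) * \<bar>F' z - (r / 2 * sin (psi z - psi r) + r * z / 2 * (cos (psi z - psi r) * phi_of F' z))\<bar>"
    unfolding w X_def[symmetric] using rs by (simp add: abs_mult)
  also have "\<dots> \<le> (s - r) * ((2 * K + 2 * K^3) * (s - r))"
    using hb2 rs by (intro mult_left_mono) auto
  finally show ?thesis by (simp add: power2_eq_square algebra_simps)
qed simp

end

lemma core_real:
  fixes r r' \<beta> p1 p2 ch Z E1 Phi K CE :: real
  assumes K1: "1 \<le> K" and r0: "0 < r" and rr: "r \<le> r'"
    and Ds: "r' - r \<le> r' / (64 * K)"
    and bb: "\<bar>\<beta>\<bar> \<le> 2 * K * (r' - r) / r"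
    and pp: "p1\<^sup>2 + p2\<^sup>2 = 1" and chi0: "0 \<le> ch" and chi2: "ch\<^sup>2 = (1 - p1)\<^sup>2 + p2\<^sup>2"
    and Phi_eq: "Phi = E1 + r * r' * (p2 * cos \<beta> - (1 - p1) * sin \<beta>) / 2"
    and E1b: "\<bar>E1\<bar> \<le> CE * (r' - r)\<^sup>2"
    and Z0: "0 \<le> Z" and Zr: "r\<^sup>2 - r * r' * (p1 * cos \<beta> - p2 * sin \<beta>) \<le> Z * r"
  shows "\<bar>Phi\<bar> \<le> CE * (r' - r)\<^sup>2 + r'\<^sup>2 * ch"
    and "r'\<^sup>2 * ch \<le> 16 * \<bar>Phi\<bar> + 16 * CE * (r' - r)\<^sup>2 + 8 * Z\<^sup>2"
proof -
  define D where "D = r' - r"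
  have r'0: "0 < r'" using r0 rr by simp
  have D0: "0 \<le> D" using rr unfolding D_def by simp
  have "r' / (64 * K) \<le> r' / 64" by (rule divide_left_mono) (use K1 r'0 in auto)
  then have D64: "D \<le> r' / 64" using Ds unfolding D_def by simp
  have h1: "r' \<le> 2 * r" using D64 r0 unfolding D_def by linarith
  have h2: "\<bar>\<beta>\<bar> \<le> 1/16"
  proof -
    have "2 * K * D \<le> 2 * K * (r' / (64 * K))" by (rule mult_left_mono) (use Ds K1 in \<open>auto simp: D_def\<close>)
    also have "\<dots> = r' / 32" using K1 by simp
    finally have "2 * K * D \<le> r' / 32" .
    then have "2 * K * D / r \<le> (r' / 32) / r" by (rule divide_right_mono) (use r0 in simp)
    also have "\<dots> \<le> (2 * r / 32) / r" by (rule divide_right_mono) (use h1 r0 in simp_all)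
    also have "\<dots> = 1/16" using r0 by simp
    finally show ?thesis using bb unfolding D_def by simp
  qed
  have h3: "9/10 \<le> cos \<beta>"
  proof -
    have "\<beta>\<^sup>2 \<le> (1/16)\<^sup>2" using h2 abs_le_square_iff[of \<beta> "1/16"] by simp
    then show ?thesis using one_minus_cos_le[of \<beta>] by (simp add: power2_eq_square)
  qed
  have h4: "\<bar>sin \<beta>\<bar> \<le> 1/16" using abs_sin_x_le_abs_x[of \<beta>] h2 by simp
  have h5: "\<bar>p2\<bar> \<le> ch"
  proof -
    have "p2\<^sup>2 \<le> ch\<^sup>2" using chi2 by simp
    then show ?thesis using chi0 abs_le_square_iff[of p2 ch] by simp
  qed
  have h6: "1 - p1 = ch\<^sup>2 / 2" using pp chi2 by (simp add: power2_eq_square algebra_simps)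
  have p1ge: "-1 \<le> p1"
  proof -
    have "p1\<^sup>2 \<le> 1" using pp zero_le_power2[of p2] by linarith
    then have "\<bar>p1\<bar> \<le> 1" using abs_le_square_iff[of p1 1] by simp
    then show ?thesis by linarith
  qed
  have h7: "ch \<le> 2"
  proof -
    have "ch\<^sup>2 \<le> 2\<^sup>2" using h6 p1ge by simp
    then show ?thesis using chi0 abs_le_square_iff[of ch 2] by simp
  qed
  have h8: "0 \<le> 1 - p1" "1 - p1 \<le> ch"
  proof -
    show "0 \<le> 1 - p1" using h6 zero_le_power2[of ch] by linarith
    have "ch * ch \<le> 2 * ch" using h7 chi0 by (simp add: mult_right_mono)
    then show "1 - p1 \<le> ch" using h6 by (simp add: power2_eq_square)
  qed
  define T1 where "T1 = r * r' * (p2 * cos \<beta>) / 2"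
  define T2 where "T2 = r * r' * ((1 - p1) * sin \<beta>) / 2"
  have PT: "Phi = E1 + T1 - T2" unfolding Phi_eq T1_def T2_def by (simp add: algebra_simps diff_divide_distrib add_divide_distrib)
  have rr'0: "0 \<le> r * r'" using r0 r'0 by simp
  have rr'2: "r * r' \<le> r'\<^sup>2" using rr r'0 by (simp add: power2_eq_square mult_right_mono)
  have T1b: "\<bar>T1\<bar> \<le> r'\<^sup>2 * ch / 2"
  proof -
    have pc: "\<bar>p2 * cos \<beta>\<bar> \<le> ch"
    proof -
      have "\<bar>p2 * cos \<beta>\<bar> = \<bar>p2\<bar> * \<bar>cos \<beta>\<bar>" by (rule abs_mult)
      also have "\<dots> \<le> \<bar>p2\<bar> * 1" by (rule mult_left_mono) auto
      finally show ?thesis using h5 by simp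
    qed
    have "\<bar>T1\<bar> = r * r' * \<bar>p2 * cos \<beta>\<bar> / 2" unfolding T1_def using r0 r'0 by (simp add: abs_mult)
    also have "\<dots> \<le> r * r' * ch / 2" by (rule divide_right_mono[OF mult_left_mono[OF pc rr'0]]) simp
    also have "\<dots> \<le> r'\<^sup>2 * ch / 2" by (rule divide_right_mono[OF mult_right_mono[OF rr'2 chi0]]) simp
    finally show ?thesis .
  qed
  have T2b: "\<bar>T2\<bar> \<le> r'\<^sup>2 * ch / 32"
  proof -
    have ps: "\<bar>(1 - p1) * sin \<beta>\<bar> \<le> ch * (1/16)"
    proof -
      have "\<bar>(1 - p1) * sin \<beta>\<bar> = (1 - p1) * \<bar>sin \<beta>\<bar>" using h8 by (simp add: abs_mult)
      also have "\<dots> \<le> ch * (1/16)" by (rule mult_mono) (use h8 h4 chi0 in auto)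
      finally show ?thesis .
    qed
    have "\<bar>T2\<bar> = r * r' * \<bar>(1 - p1) * sin \<beta>\<bar> / 2" unfolding T2_def using r0 r'0 by (simp add: abs_mult)
    also have "\<dots> \<le> r * r' * (ch * (1/16)) / 2" by (rule divide_right_mono[OF mult_left_mono[OF ps rr'0]]) simp
    also have "\<dots> = (r * r') * ch / 32" by simp
    also have "\<dots> \<le> r'\<^sup>2 * ch / 32" by (rule divide_right_mono[OF mult_right_mono[OF rr'2 chi0]]) simp
    finally show ?thesis .
  qed
  show "\<bar>Phi\<bar> \<le> CE * (r' - r)\<^sup>2 + r'\<^sup>2 * ch"
  proof -
    have "\<bar>Phi\<bar> \<le> \<bar>E1\<bar> + \<bar>T1\<bar> + \<bar>T2\<bar>"
      unfolding PT using abs_triangle_ineq[of "E1 + T1" "- T2"] abs_triangle_ineq[of E1 T1] by simp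
    moreover have "0 \<le> r'\<^sup>2 * ch" using chi0 by simp
    ultimately show ?thesis using T1b T2b E1b unfolding D_def by linarith
  qed
  show "r'\<^sup>2 * ch \<le> 16 * \<bar>Phi\<bar> + 16 * CE * (r' - r)\<^sup>2 + 8 * Z\<^sup>2"
  proof (cases "-1/2 \<le> p1")
    case True
    have "p2\<^sup>2 = (1 - p1) * (1 + p1)" using pp by (simp add: algebra_simps power2_eq_square)
    also have "\<dots> \<ge> (1 - p1) * (1/2)" using True h8 by (intro mult_left_mono) auto
    finally have "(ch/2)\<^sup>2 \<le> p2\<^sup>2" using h6 by (simp add: power2_eq_square)
    then have p2b: "ch/2 \<le> \<bar>p2\<bar>" using chi0 abs_le_square_iff[of "ch/2" p2] by simp
    have "r'\<^sup>2 * ch * (9/80) \<le> \<bar>T1\<bar>"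
    proof -
      have f1: "(r' / 2) * r' \<le> r * r'" using h1 r'0 by (simp add: mult_right_mono)
      have f2: "(ch/2) * (9/10) \<le> \<bar>p2\<bar> * cos \<beta>" by (rule mult_mono[OF p2b h3]) (use chi0 in auto)
      have "((r' / 2) * r') * ((ch/2) * (9/10)) \<le> (r * r') * (\<bar>p2\<bar> * cos \<beta>)"
        by (rule mult_mono[OF f1 f2]) (use r0 r'0 chi0 in auto)
      moreover have "\<bar>T1\<bar> = (r * r') * (\<bar>p2\<bar> * cos \<beta>) / 2"
        unfolding T1_def using r0 r'0 h3 by (simp add: abs_mult)
      ultimately show ?thesis by (simp add: power2_eq_square algebra_simps)
    qed
    moreover have "\<bar>T1\<bar> \<le> \<bar>Phi\<bar> + \<bar>E1\<bar> + \<bar>T2\<bar>"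
    proof -
      have "T1 = Phi - E1 + T2" using PT by simp
      then show ?thesis using abs_triangle_ineq[of "Phi - E1" T2] abs_triangle_ineq4[of Phi E1] by simp
    qed
    moreover have "0 \<le> Z\<^sup>2" by simp
    ultimately show ?thesis using T2b E1b unfolding D_def by linarith
  next
    case False
    have "p1 * cos \<beta> - p2 * sin \<beta> \<le> 0"
    proof -
      have "p1 * cos \<beta> \<le> (-1/2) * (9/10)"
      proof -
        have "p1 * cos \<beta> \<le> (-1/2) * cos \<beta>" using False h3 by (intro mult_right_mono) auto
        also have "\<dots> \<le> (-1/2) * (9/10)" using h3 by simp
        finally show ?thesis .
      qed
      moreover have "\<bar>p2 * sin \<beta>\<bar> \<le> 1 * (1/16)"
      proof -
        have "p2\<^sup>2 \<le> 1" using pp zero_le_power2[of p1] by linarith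
        then have "\<bar>p2\<bar> \<le> 1" using abs_le_square_iff[of p2 1] by simp
        then have "\<bar>p2\<bar> * \<bar>sin \<beta>\<bar> \<le> 1 * (1/16)" by (rule mult_mono) (use h4 in auto)
        then show ?thesis by (simp add: abs_mult)
      qed
      ultimately show ?thesis by (simp add: abs_le_iff)
    qed
    then have "r * r' * (p1 * cos \<beta> - p2 * sin \<beta>) \<le> 0" using rr'0 by (simp add: mult_nonneg_nonpos)
    then have "r * r \<le> Z * r" using Zr by (simp add: power2_eq_square)
    then have rZ: "r \<le> Z" using r0 by simp
    have "r'\<^sup>2 * ch \<le> r'\<^sup>2 * 2" using h7 by (simp add: mult_left_mono)
    moreover have "r'\<^sup>2 \<le> (2 * Z)\<^sup>2" by (rule power_mono) (use h1 rZ r'0 in auto)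
    ultimately have "r'\<^sup>2 * ch \<le> 8 * Z\<^sup>2" by (simp add: power_mult_distrib)
    moreover have "0 \<le> 16 * \<bar>Phi\<bar> + 16 * CE * (r' - r)\<^sup>2"
    proof -
      have "0 \<le> CE * (r' - r)\<^sup>2" using E1b by linarith
      then show ?thesis by simp
    qed
    ultimately show ?thesis by linarith
  qed
qed


definition qpt :: "(real \<Rightarrow> real) \<Rightarrow> complex \<Rightarrow> complex" where
  "qpt F' z = sgn z * cis (- psi_of F' (cmod z))"

definition gm :: "(real \<Rightarrow> real) \<Rightarrow> nat \<Rightarrow> complex \<Rightarrow> complex" where
  "gm F' m z = complex_of_real (cmod z) * Tb m (Arg (qpt F' z))"

definition PhiH :: "(real \<Rightarrow> real) \<Rightarrow> complex \<Rightarrow> complex \<Rightarrow> real" where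
  "PhiH F z w = F (cmod z) - F (cmod w) + Im (cnj z * w) / 2"

definition Gs :: "(real \<Rightarrow> real) \<Rightarrow> complex \<Rightarrow> complex \<Rightarrow> real" where
  "Gs F' z w = (\<Sum>m<6. (cmod (gm F' m z - gm F' m w))\<^sup>2)"

lemma sq_sum_le: "((x::real) + y)\<^sup>2 \<le> 2 * x\<^sup>2 + 2 * y\<^sup>2"
proof -
  have "0 \<le> (x - y)\<^sup>2" by simp
  then show ?thesis by (simp add: power2_eq_square algebra_simps)
qed

lemma gm_norm: "cmod (gm F' m z) \<le> 2 * cmod z"
proof -
  have "cmod z * cmod (Tb m (Arg (qpt F' z))) \<le> cmod z * 2" by (rule mult_left_mono[OF Tb_bound]) simp
  then show ?thesis by (simp add: gm_def norm_mult mult.commute)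
qed

lemma qpt_norm: "z \<noteq> 0 \<Longrightarrow> cmod (qpt F' z) = 1"
  unfolding qpt_def by (simp add: norm_mult norm_sgn)

lemma cis_Arg_qpt: "z \<noteq> 0 \<Longrightarrow> cis (Arg (qpt F' z)) = qpt F' z"
proof -
  assume z: "z \<noteq> 0"
  then have n: "cmod (qpt F' z) = 1" by (rule qpt_norm)
  then have "qpt F' z \<noteq> 0" by auto
  then have "cis (Arg (qpt F' z)) = sgn (qpt F' z)" by (rule cis_Arg)
  also have "\<dots> = qpt F' z" using n by (simp add: sgn_div_norm)
  finally show ?thesis .
qed

lemma z_decomp: "z \<noteq> 0 \<Longrightarrow> z = complex_of_real (cmod z) * qpt F' z * cis (psi_of F' (cmod z))"
proof -
  assume z: "z \<noteq> 0"
  have "qpt F' z * cis (psi_of F' (cmod z)) = sgn z"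
    unfolding qpt_def by (simp add: cis_mult mult.assoc)
  then have "complex_of_real (cmod z) * qpt F' z * cis (psi_of F' (cmod z)) = complex_of_real (cmod z) * sgn z"
    by (simp add: mult.assoc)
  also have "\<dots> = z" using z by (simp add: sgn_eq)
  finally show ?thesis by simp
qed

lemma G_relations:
  fixes r r' :: real and Ta Tb' :: "nat \<Rightarrow> complex"
  assumes rr: "0 \<le> r" "r \<le> r'" and Tb2: "\<And>m. cmod (Ta m) \<le> 2"
  shows "(\<Sum>m<6. (cmod (of_real r * Ta m - of_real r' * Tb' m))\<^sup>2)
           \<le> 2 * r'\<^sup>2 * (\<Sum>m<6. (cmod (Ta m - Tb' m))\<^sup>2) + 48 * (r' - r)\<^sup>2"
    and "r'\<^sup>2 * (\<Sum>m<6. (cmod (Ta m - Tb' m))\<^sup>2)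
           \<le> 2 * (\<Sum>m<6. (cmod (of_real r * Ta m - of_real r' * Tb' m))\<^sup>2) + 48 * (r' - r)\<^sup>2"
proof -
  have eq: "\<And>m. of_real r * Ta m - of_real r' * Tb' m = of_real r' * (Ta m - Tb' m) - of_real (r' - r) * Ta m"
    by (simp add: algebra_simps)
  have b2: "\<And>m. cmod (of_real (r' - r) * Ta m) \<le> (r' - r) * 2"
  proof -
    fix m
    have n: "cmod (complex_of_real (r' - r)) = r' - r" using rr by (simp del: of_real_diff)
    show "cmod (of_real (r' - r) * Ta m) \<le> (r' - r) * 2"
      by (simp only: norm_mult n) (rule mult_left_mono[OF Tb2], use rr in simp)
  qed
  have A: "\<And>m. (cmod (of_real r * Ta m - of_real r' * Tb' m))\<^sup>2 \<le> 2 * r'\<^sup>2 * (cmod (Ta m - Tb' m))\<^sup>2 + 8 * (r' - r)\<^sup>2"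
  proof -
    fix m
    have "cmod (of_real r * Ta m - of_real r' * Tb' m) \<le> r' * cmod (Ta m - Tb' m) + (r' - r) * 2"
      unfolding eq using norm_triangle_ineq4[of "of_real r' * (Ta m - Tb' m)" "of_real (r' - r) * Ta m"] b2[of m] rr
      by (simp add: norm_mult)
    then have "(cmod (of_real r * Ta m - of_real r' * Tb' m))\<^sup>2 \<le> (r' * cmod (Ta m - Tb' m) + (r' - r) * 2)\<^sup>2"
      by (rule power_mono) simp
    also have "\<dots> \<le> 2 * (r' * cmod (Ta m - Tb' m))\<^sup>2 + 2 * ((r' - r) * 2)\<^sup>2" by (rule sq_sum_le)
    also have "\<dots> = 2 * r'\<^sup>2 * (cmod (Ta m - Tb' m))\<^sup>2 + 8 * (r' - r)\<^sup>2"
      by (simp only: power_mult_distrib) simp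
    finally show "?thesis m" .
  qed
  have B: "\<And>m. r'\<^sup>2 * (cmod (Ta m - Tb' m))\<^sup>2 \<le> 2 * (cmod (of_real r * Ta m - of_real r' * Tb' m))\<^sup>2 + 8 * (r' - r)\<^sup>2"
  proof -
    fix m
    have e2: "of_real r' * (Ta m - Tb' m) = (of_real r * Ta m - of_real r' * Tb' m) + of_real (r' - r) * Ta m"
      by (simp add: algebra_simps)
    have "r' * cmod (Ta m - Tb' m) = cmod (of_real r' * (Ta m - Tb' m))" using rr by (simp add: norm_mult)
    also have "\<dots> = cmod ((of_real r * Ta m - of_real r' * Tb' m) + of_real (r' - r) * Ta m)"
      by (simp only: e2)
    also have "\<dots> \<le> cmod (of_real r * Ta m - of_real r' * Tb' m) + cmod (of_real (r' - r) * Ta m)"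
      by (rule norm_triangle_ineq)
    also have "\<dots> \<le> cmod (of_real r * Ta m - of_real r' * Tb' m) + (r' - r) * 2"
      using b2[of m] by linarith
    finally have "r' * cmod (Ta m - Tb' m) \<le> cmod (of_real r * Ta m - of_real r' * Tb' m) + (r' - r) * 2" .
    then have "(r' * cmod (Ta m - Tb' m))\<^sup>2 \<le> (cmod (of_real r * Ta m - of_real r' * Tb' m) + (r' - r) * 2)\<^sup>2"
      by (rule power_mono) (use rr in simp)
    also have "\<dots> \<le> 2 * (cmod (of_real r * Ta m - of_real r' * Tb' m))\<^sup>2 + 2 * ((r' - r) * 2)\<^sup>2" by (rule sq_sum_le)
    also have "\<dots> = 2 * (cmod (of_real r * Ta m - of_real r' * Tb' m))\<^sup>2 + 8 * (r' - r)\<^sup>2"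
      by (simp only: power_mult_distrib) simp
    finally have "(r' * cmod (Ta m - Tb' m))\<^sup>2 \<le> 2 * (cmod (of_real r * Ta m - of_real r' * Tb' m))\<^sup>2 + 8 * (r' - r)\<^sup>2" .
    then show "?thesis m" by (simp only: power_mult_distrib)
  qed
  show "(\<Sum>m<6. (cmod (of_real r * Ta m - of_real r' * Tb' m))\<^sup>2)
           \<le> 2 * r'\<^sup>2 * (\<Sum>m<6. (cmod (Ta m - Tb' m))\<^sup>2) + 48 * (r' - r)\<^sup>2"
    using sum_mono[of "{..<6::nat}", OF A] by (simp add: sum.distrib sum_distrib_left)
  show "r'\<^sup>2 * (\<Sum>m<6. (cmod (Ta m - Tb' m))\<^sup>2)
           \<le> 2 * (\<Sum>m<6. (cmod (of_real r * Ta m - of_real r' * Tb' m))\<^sup>2) + 48 * (r' - r)\<^sup>2"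
    using sum_mono[of "{..<6::nat}", OF B] by (simp add: sum.distrib sum_distrib_left)
qed


definition CEc :: "real \<Rightarrow> real" where "CEc K = 2 * K + 2 * K^3"
definition CCc :: "real \<Rightarrow> real" where "CCc K = 96 * (64 * K)\<^sup>2 * K + 14400 * (CEc K + 1)"

context Fset begin

lemma CE_nonneg: "0 \<le> CEc K" unfolding CEc_def using K1 by simp

lemma far_case:
  assumes rr: "cmod z \<le> cmod w" and far: "cmod w / (64 * K) \<le> cmod w - cmod z"
  shows "\<bar>PhiH F z w\<bar> \<le> CCc K * ((cmod (z - w))\<^sup>2 + Gs F' z w)"
    and "Gs F' z w \<le> CCc K * ((cmod (z - w))\<^sup>2 + \<bar>PhiH F z w\<bar>)"
proof -
  define r r' Z where "r = cmod z" and "r' = cmod w" and "Z = cmod (z - w)"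
  have r0: "0 \<le> r" "r \<le> r'" using rr unfolding r_def r'_def by auto
  have ZD: "r' - r \<le> Z" unfolding r_def r'_def Z_def
    using norm_triangle_ineq2[of w z] by (simp add: norm_minus_commute)
  have W: "r' \<le> 64 * K * Z"
  proof -
    have "r' / (64 * K) \<le> Z" using far ZD unfolding r_def r'_def by linarith
    then show ?thesis using K1 by (simp add: field_simps)
  qed
  have r'Z: "r'\<^sup>2 \<le> (64 * K)\<^sup>2 * Z\<^sup>2"
  proof -
    have "r'\<^sup>2 \<le> (64 * K * Z)\<^sup>2" by (rule power_mono[OF W]) (use r0 in simp)
    then show ?thesis by (simp add: power_mult_distrib)
  qed
  have GsZ: "Gs F' z w \<le> 96 * r'\<^sup>2"
  proof -
    have "\<And>m. (cmod (gm F' m z - gm F' m w))\<^sup>2 \<le> 16 * r'\<^sup>2"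
    proof -
      fix m
      have "cmod (gm F' m z - gm F' m w) \<le> 2 * r + 2 * r'"
        using norm_triangle_ineq4[of "gm F' m z" "gm F' m w"] gm_norm[of F' m z] gm_norm[of F' m w]
        unfolding r_def r'_def by linarith
      also have "\<dots> \<le> 4 * r'" using r0 by simp
      finally have "(cmod (gm F' m z - gm F' m w))\<^sup>2 \<le> (4 * r')\<^sup>2" by (rule power_mono) simp
      then show "(cmod (gm F' m z - gm F' m w))\<^sup>2 \<le> 16 * r'\<^sup>2" by (simp add: power_mult_distrib)
    qed
    then have "Gs F' z w \<le> (\<Sum>m<(6::nat). 16 * r'\<^sup>2)" unfolding Gs_def by (rule sum_mono)
    then show ?thesis by simp
  qed
  have PhiZ: "\<bar>PhiH F z w\<bar> \<le> 2 * K * r'\<^sup>2"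
  proof -
    have f: "\<bar>F r' - F r\<bar> \<le> K * r' * (r' - r)" by (rule F_lip) (use r0 in auto)
    have "K * r' * (r' - r) \<le> K * r' * r'" using K1 r0 by (intro mult_left_mono) auto
    have im: "\<bar>Im (cnj z * w)\<bar> \<le> r * r'"
      using abs_Im_le_cmod[of "cnj z * w"] unfolding r_def r'_def by (simp add: norm_mult)
    have "r * r' \<le> r' * r'" using r0 by (intro mult_right_mono) auto
    have "\<bar>PhiH F z w\<bar> \<le> \<bar>F r' - F r\<bar> + \<bar>Im (cnj z * w)\<bar> / 2"
      unfolding PhiH_def r_def r'_def
      using abs_triangle_ineq[of "F (cmod z) - F (cmod w)" "Im (cnj z * w) / 2"]
      by (simp only: abs_minus_commute[of "F (cmod z)"] abs_divide)
    also have "\<dots> \<le> K * r' * r' + r' * r' / 2"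
      using f \<open>K * r' * (r' - r) \<le> K * r' * r'\<close> im \<open>r * r' \<le> r' * r'\<close> by linarith
    also have "\<dots> \<le> 2 * K * (r' * r')"
    proof -
      have "1 * (r' * r') \<le> K * (r' * r')" by (rule mult_right_mono) (use K1 in auto)
      moreover have "0 \<le> r' * r'" by simp
      ultimately have "r' * r' / 2 \<le> K * (r' * r')" by linarith
      then show ?thesis by (simp add: algebra_simps)
    qed
    finally show ?thesis by (simp add: power2_eq_square)
  qed
  have CC1: "96 * (64 * K)\<^sup>2 \<le> CCc K"
  proof -
    have "96 * (64 * K)\<^sup>2 * 1 \<le> 96 * (64 * K)\<^sup>2 * K" using K1 by (intro mult_left_mono) auto
    moreover have "0 \<le> 14400 * (CEc K + 1)" using CE_nonneg by simp
    ultimately show ?thesis unfolding CCc_def by simp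
  qed
  have CC2: "2 * K * (64 * K)\<^sup>2 \<le> CCc K"
  proof -
    have "2 * K * (64 * K)\<^sup>2 \<le> 96 * (64 * K)\<^sup>2 * K" using K1 by simp
    moreover have "0 \<le> 14400 * (CEc K + 1)" using CE_nonneg by simp
    ultimately show ?thesis unfolding CCc_def by simp
  qed
  have CC0: "0 \<le> CCc K" using CC1 by (meson order_trans zero_le_mult_iff zero_le_numeral zero_le_power2)
  have G0: "0 \<le> Gs F' z w" unfolding Gs_def by (simp add: sum_nonneg)
  show "\<bar>PhiH F z w\<bar> \<le> CCc K * ((cmod (z - w))\<^sup>2 + Gs F' z w)"
  proof -
    have "\<bar>PhiH F z w\<bar> \<le> 2 * K * ((64 * K)\<^sup>2 * Z\<^sup>2)"
    proof -
      have "2 * K * r'\<^sup>2 \<le> 2 * K * ((64 * K)\<^sup>2 * Z\<^sup>2)" by (rule mult_left_mono[OF r'Z]) (use K1 in simp)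
      then show ?thesis using PhiZ by linarith
    qed
    also have "\<dots> = (2 * K * (64 * K)\<^sup>2) * Z\<^sup>2" by simp
    also have "\<dots> \<le> CCc K * Z\<^sup>2" by (rule mult_right_mono[OF CC2]) simp
    also have "\<dots> \<le> CCc K * (Z\<^sup>2 + Gs F' z w)" by (rule mult_left_mono) (use G0 CC0 in auto)
    finally show ?thesis unfolding Z_def .
  qed
  show "Gs F' z w \<le> CCc K * ((cmod (z - w))\<^sup>2 + \<bar>PhiH F z w\<bar>)"
  proof -
    have "Gs F' z w \<le> 96 * ((64 * K)\<^sup>2 * Z\<^sup>2)" using GsZ r'Z by simp
    also have "\<dots> = (96 * (64 * K)\<^sup>2) * Z\<^sup>2" by simp
    also have "\<dots> \<le> CCc K * Z\<^sup>2" by (rule mult_right_mono[OF CC1]) simp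
    also have "\<dots> \<le> CCc K * (Z\<^sup>2 + \<bar>PhiH F z w\<bar>)" by (rule mult_left_mono) (use CC0 in auto)
    finally show ?thesis unfolding Z_def .
  qed
qed

end

context Fset begin

lemma near_case:
  assumes rr: "cmod z \<le> cmod w" and near: "cmod w - cmod z < cmod w / (64 * K)"
  shows "\<bar>PhiH F z w\<bar> \<le> CCc K * ((cmod (z - w))\<^sup>2 + Gs F' z w)"
    and "Gs F' z w \<le> CCc K * ((cmod (z - w))\<^sup>2 + \<bar>PhiH F z w\<bar>)"
proof -
  define r r' Z where "r = cmod z" and "r' = cmod w" and "Z = cmod (z - w)"
  have r00: "0 \<le> r" "r \<le> r'" using rr unfolding r_def r'_def by auto
  have r'0: "0 < r'"
  proof (rule ccontr)
    assume "\<not> 0 < r'"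
    then have "r' = 0" using r00 by simp
    then show False using near r00 unfolding r_def r'_def by simp
  qed
  have "r' / (64 * K) \<le> r' / 64" by (rule divide_left_mono) (use K1 r'0 in auto)
  then have r0: "0 < r" and h1: "r' \<le> 2 * r" using near r'0 unfolding r_def r'_def by linarith+
  have z0: "z \<noteq> 0" using r0 unfolding r_def by auto
  have w0: "w \<noteq> 0" using r'0 unfolding r'_def by auto
  have ZD: "r' - r \<le> Z" unfolding r_def r'_def Z_def
    using norm_triangle_ineq2[of w z] by (simp add: norm_minus_commute)
  define q q' where "q = qpt F' z" and "q' = qpt F' w"
  define a a' where "a = Arg q" and "a' = Arg q'"
  have ca: "cis a = q" "cis a' = q'" unfolding a_def a'_def q_def q'_def using cis_Arg_qpt z0 w0 by auto
  have qn: "cmod q = 1" "cmod q' = 1" unfolding q_def q'_def using qpt_norm z0 w0 by auto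
  have qq: "cnj q * q = 1"
  proof -
    have "q * cnj q = of_real ((cmod q)\<^sup>2)" by (rule complex_norm_square[symmetric])
    then show ?thesis using qn by (simp add: mult.commute)
  qed
  define \<rho> where "\<rho> = cnj q * q'"
  define p1 p2 where "p1 = Re \<rho>" and "p2 = Im \<rho>"
  define \<beta> where "\<beta> = psi r' - psi r"
  have zq: "z = of_real r * q * cis (psi r)" unfolding r_def q_def by (rule z_decomp[OF z0])
  have wq: "w = of_real r' * q' * cis (psi r')" unfolding r'_def q'_def by (rule z_decomp[OF w0])
  have cw: "cnj z * w = of_real (r * r') * (\<rho> * cis \<beta>)"
  proof -
    have "cnj z * w = of_real r * cnj q * cis (- psi r) * (of_real r' * q' * cis (psi r'))"
      by (subst zq, subst wq) (simp add: cis_cnj)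
    also have "\<dots> = of_real (r * r') * (cnj q * q') * (cis (- psi r) * cis (psi r'))"
      by (simp add: algebra_simps)
    also have "cis (- psi r) * cis (psi r') = cis \<beta>" unfolding \<beta>_def by (simp add: cis_mult)
    finally show ?thesis unfolding \<rho>_def by (simp add: mult.assoc)
  qed
  have Im_cw: "Im (cnj z * w) = r * r' * (p2 * cos \<beta> + p1 * sin \<beta>)"
    unfolding cw p1_def p2_def by (simp add: algebra_simps)
  have Re_cw: "Re (cnj z * w) = r * r' * (p1 * cos \<beta> - p2 * sin \<beta>)"
    unfolding cw p1_def p2_def by (simp add: algebra_simps)
  have pp: "p1\<^sup>2 + p2\<^sup>2 = 1"
  proof -
    have "cmod \<rho> = 1" unfolding \<rho>_def using qn by (simp add: norm_mult)
    then show ?thesis using cmod_power2[of \<rho>] unfolding p1_def p2_def by simp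
  qed
  define ch where "ch = cmod (cis a - cis a')"
  have ch0: "0 \<le> ch" unfolding ch_def by simp
  have chq: "ch = cmod (1 - \<rho>)"
  proof -
    have "q - q' = q * (1 - \<rho>)" unfolding \<rho>_def
      by (simp add: algebra_simps mult.assoc[symmetric] qq[unfolded mult.commute[of "cnj q"]])
    then have "cmod (q - q') = cmod (1 - \<rho>)" using qn by (simp add: norm_mult)
    then show ?thesis unfolding ch_def ca .
  qed
  have ch2: "ch\<^sup>2 = (1 - p1)\<^sup>2 + p2\<^sup>2"
    unfolding chq cmod_power2 p1_def p2_def by simp
  define E1 where "E1 = F r - F r' + r * r' * sin \<beta> / 2"
  have Phi_eq: "PhiH F z w = E1 + r * r' * (p2 * cos \<beta> - (1 - p1) * sin \<beta>) / 2"
    unfolding PhiH_def E1_def Im_cw r_def[symmetric] r'_def[symmetric] by (simp add: algebra_simps diff_divide_distrib add_divide_distrib)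
  have E1b: "\<bar>E1\<bar> \<le> CEc K * (r' - r)\<^sup>2"
    unfolding E1_def CEc_def \<beta>_def using E1_bound[OF r0 r00(2) h1] by (simp add: algebra_simps)
  have bb: "\<bar>\<beta>\<bar> \<le> 2 * K * (r' - r) / r" unfolding \<beta>_def by (rule psi_lip[OF r0 r00(2)])
  have Z0: "0 \<le> Z" unfolding Z_def by simp
  have Zr: "r\<^sup>2 - r * r' * (p1 * cos \<beta> - p2 * sin \<beta>) \<le> Z * r"
  proof -
    have "cnj z * (z - w) = of_real (r\<^sup>2) - cnj z * w"
      using complex_norm_square[of z] unfolding r_def by (simp add: algebra_simps)
    then have "Z * r = cmod (of_real (r\<^sup>2) - cnj z * w)"
      unfolding Z_def r_def by (metis complex_mod_cnj mult.commute norm_mult)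
    moreover have "Re (of_real (r\<^sup>2) - cnj z * w) \<le> cmod (of_real (r\<^sup>2) - cnj z * w)"
      by (rule complex_Re_le_cmod)
    ultimately show ?thesis using Re_cw by simp
  qed
  have Ds: "r' - r \<le> r' / (64 * K)" using near unfolding r_def r'_def by simp
  note core = core_real[OF K1 r0 r00(2) Ds bb pp ch0 ch2 Phi_eq E1b Z0 Zr]
  define S where "S = (\<Sum>m<6. (cmod (Tb m a - Tb m a'))\<^sup>2)"
  have S1: "S \<le> 450 * ch" unfolding S_def ch_def by (rule snowflake(1))
  have S2: "ch / 196 \<le> S" unfolding S_def ch_def by (rule snowflake(2))
  have Gs_eq: "Gs F' z w = (\<Sum>m<6. (cmod (of_real r * Tb m a - of_real r' * Tb m a'))\<^sup>2)"
    unfolding Gs_def gm_def r_def r'_def a_def a'_def q_def q'_def ..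
  have G1: "Gs F' z w \<le> 2 * r'\<^sup>2 * S + 48 * (r' - r)\<^sup>2"
    unfolding Gs_eq S_def by (rule G_relations(1)[OF r00]) (rule Tb_bound)
  have G2: "r'\<^sup>2 * S \<le> 2 * Gs F' z w + 48 * (r' - r)\<^sup>2"
    unfolding Gs_eq S_def by (rule G_relations(2)[OF r00]) (rule Tb_bound)
  have rS1: "r'\<^sup>2 * S \<le> 450 * (r'\<^sup>2 * ch)"
    using mult_left_mono[OF S1, of "r'\<^sup>2"] by simp
  have rS2: "r'\<^sup>2 * ch \<le> 196 * (r'\<^sup>2 * S)"
    using mult_left_mono[OF S2, of "r'\<^sup>2"] by simp
  have DZ: "(r' - r)\<^sup>2 \<le> Z\<^sup>2" by (rule power_mono[OF ZD]) (use r00 in simp)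
  define cE where "cE = CEc K"
  have cE0: "0 \<le> cE" unfolding cE_def by (rule CE_nonneg)
  have cDZ: "cE * (r' - r)\<^sup>2 \<le> cE * Z\<^sup>2" by (rule mult_left_mono[OF DZ cE0])
  define G where "G = Gs F' z w"
  define P where "P = \<bar>PhiH F z w\<bar>"
  have G0: "0 \<le> G" unfolding G_def Gs_def by (simp add: sum_nonneg)
  have P0: "0 \<le> P" unfolding P_def by simp
  have N1: "P \<le> cE * Z\<^sup>2 + 392 * G + 9408 * Z\<^sup>2"
    using core(1) rS2 G2 DZ cDZ unfolding P_def G_def cE_def by linarith
  have N2: "G \<le> 14400 * P + 14400 * (cE * Z\<^sup>2) + 7248 * Z\<^sup>2"
    using core(2) rS1 G1 DZ cDZ unfolding P_def G_def cE_def by linarith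
  define cc where "cc = CCc K"
  have cc1: "14400 * (cE + 1) \<le> cc"
  proof -
    have "0 \<le> 96 * (64 * K)\<^sup>2 * K" using K1 by simp
    then show ?thesis unfolding cc_def CCc_def cE_def by linarith
  qed
  have m1: "14400 * (cE + 1) * Z\<^sup>2 \<le> cc * Z\<^sup>2" by (rule mult_right_mono[OF cc1]) simp
  have m2: "14400 * (cE + 1) * G \<le> cc * G" by (rule mult_right_mono[OF cc1 G0])
  have m3: "14400 * (cE + 1) * P \<le> cc * P" by (rule mult_right_mono[OF cc1 P0])
  have cG: "0 \<le> cE * G" using cE0 G0 by simp
  have cP: "0 \<le> cE * P" using cE0 P0 by simp
  have Z2: "0 \<le> Z\<^sup>2" by simp
  define X where "X = cE * Z\<^sup>2"
  define U where "U = cc * Z\<^sup>2"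
  define V where "V = cc * G"
  define Y where "Y = cE * G"
  define U' where "U' = cc * P"
  define Y' where "Y' = cE * P"
  have e1: "14400 * (cE + 1) * Z\<^sup>2 = 14400 * X + 14400 * Z\<^sup>2" unfolding X_def by (simp add: algebra_simps)
  have e2: "14400 * (cE + 1) * G = 14400 * Y + 14400 * G" unfolding Y_def by (simp add: algebra_simps)
  have e3: "14400 * (cE + 1) * P = 14400 * Y' + 14400 * P" unfolding Y'_def by (simp add: algebra_simps)
  have e4: "cc * (Z\<^sup>2 + G) = U + V" unfolding U_def V_def by (simp add: algebra_simps)
  have e5: "cc * (Z\<^sup>2 + P) = U + U'" unfolding U_def U'_def by (simp add: algebra_simps)
  have Y0: "0 \<le> Y" "0 \<le> Y'" "0 \<le> X" unfolding Y_def Y'_def X_def using cG cP cE0 by auto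
  have "P \<le> cc * (Z\<^sup>2 + G)"
    unfolding e4 using N1[folded X_def] m1[unfolded e1, folded U_def] m2[unfolded e2, folded V_def] Y0 Z2 G0 by linarith
  then show "\<bar>PhiH F z w\<bar> \<le> CCc K * ((cmod (z - w))\<^sup>2 + Gs F' z w)"
    unfolding P_def G_def cc_def Z_def .
  have "G \<le> cc * (Z\<^sup>2 + P)"
    unfolding e5 using N2[folded X_def] m1[unfolded e1, folded U_def] m3[unfolded e3, folded U'_def] Y0 Z2 P0 by linarith
  then show "Gs F' z w \<le> CCc K * ((cmod (z - w))\<^sup>2 + \<bar>PhiH F z w\<bar>)"
    unfolding P_def G_def cc_def Z_def .
qed

end

lemma PhiH_swap: "PhiH F w z = - PhiH F z w"
proof -
  have "Im (cnj w * z) = - Im (cnj z * w)" by (simp add: algebra_simps)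
  then show ?thesis unfolding PhiH_def by linarith
qed

lemma Gs_swap: "Gs F' w z = Gs F' z w"
  unfolding Gs_def by (simp add: norm_minus_commute)

context Fset begin

lemma geo_ordered:
  assumes rr: "cmod z \<le> cmod w"
  shows "\<bar>PhiH F z w\<bar> \<le> CCc K * ((cmod (z - w))\<^sup>2 + Gs F' z w)
       \<and> Gs F' z w \<le> CCc K * ((cmod (z - w))\<^sup>2 + \<bar>PhiH F z w\<bar>)"
proof (cases "cmod w / (64 * K) \<le> cmod w - cmod z")
  case True
  then show ?thesis using far_case[OF rr True] by (intro conjI)
next
  case False
  then have nr: "cmod w - cmod z < cmod w / (64 * K)" by linarith
  show ?thesis using near_case[OF rr nr] by (intro conjI)
qed

lemma geo_all:
  shows "\<bar>PhiH F z w\<bar> \<le> CCc K * ((cmod (z - w))\<^sup>2 + Gs F' z w)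
       \<and> Gs F' z w \<le> CCc K * ((cmod (z - w))\<^sup>2 + \<bar>PhiH F z w\<bar>)"
proof (cases "cmod z \<le> cmod w")
  case True
  then show ?thesis by (rule geo_ordered)
next
  case False
  then have "cmod w \<le> cmod z" by simp
  then have "\<bar>PhiH F w z\<bar> \<le> CCc K * ((cmod (w - z))\<^sup>2 + Gs F' w z)
       \<and> Gs F' w z \<le> CCc K * ((cmod (w - z))\<^sup>2 + \<bar>PhiH F w z\<bar>)" by (rule geo_ordered)
  then show ?thesis by (simp only: PhiH_swap[of F w z] Gs_swap[of F' w z] norm_minus_commute[of w z] abs_minus_cancel)
qed

lemma CC_nonneg: "0 \<le> CCc K"
  unfolding CCc_def using CE_nonneg K1 by simp

end

lemma sum_even_odd: "(\<Sum>i<2*N. u i) = (\<Sum>j<N. u (2*j) + u (2*j+1))"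
  for u :: "nat \<Rightarrow> real"
proof (induction N)
  case (Suc N)
  have "2 * Suc N = Suc (Suc (2 * N))" by simp
  then show ?case using Suc by (simp add: add.assoc)
qed simp

definition hcoord :: "(real \<Rightarrow> real) \<Rightarrow> heis \<Rightarrow> nat \<Rightarrow> complex" where
  "hcoord F' p j = (if j = 0 then Complex (fst p) (fst (snd p)) else gm F' (j - 1) (Complex (fst p) (fst (snd p))))"

definition emb :: "(real \<Rightarrow> real) \<Rightarrow> heis \<Rightarrow> nat \<Rightarrow> real" where
  "emb F' p i = (if i < 14 then (if even i then Re (hcoord F' p (i div 2)) else Im (hcoord F' p (i div 2))) else 0)"

lemma emb_sum:
  "(\<Sum>i<14. (emb F' p i - emb F' p' i)\<^sup>2)
     = (cmod (Complex (fst p) (fst (snd p)) - Complex (fst p') (fst (snd p'))))\<^sup>2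
       + Gs F' (Complex (fst p) (fst (snd p))) (Complex (fst p') (fst (snd p')))"
proof -
  have "(\<Sum>i<14. (emb F' p i - emb F' p' i)\<^sup>2) = (\<Sum>i<2*7. (emb F' p i - emb F' p' i)\<^sup>2)" by simp
  also have "\<dots> = (\<Sum>j<7. (emb F' p (2*j) - emb F' p' (2*j))\<^sup>2 + (emb F' p (2*j+1) - emb F' p' (2*j+1))\<^sup>2)"
    by (rule sum_even_odd)
  also have "\<dots> = (\<Sum>j<7. (cmod (hcoord F' p j - hcoord F' p' j))\<^sup>2)"
  proof (rule sum.cong)
    fix j assume j: "j \<in> {..<(7::nat)}"
    have "emb F' p (2*j) = Re (hcoord F' p j)" "emb F' p' (2*j) = Re (hcoord F' p' j)"
      "emb F' p (2*j+1) = Im (hcoord F' p j)" "emb F' p' (2*j+1) = Im (hcoord F' p' j)"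
      using j unfolding emb_def by auto
    then show "(emb F' p (2*j) - emb F' p' (2*j))\<^sup>2 + (emb F' p (2*j+1) - emb F' p' (2*j+1))\<^sup>2
        = (cmod (hcoord F' p j - hcoord F' p' j))\<^sup>2"
      by (simp add: cmod_power2)
  qed simp
  also have "\<dots> = (cmod (hcoord F' p 0 - hcoord F' p' 0))\<^sup>2 + (\<Sum>j<6. (cmod (hcoord F' p (Suc j) - hcoord F' p' (Suc j)))\<^sup>2)"
  proof -
    have s7: "(7::nat) = Suc 6" by simp
    show ?thesis unfolding s7 by (rule sum.lessThan_Suc_shift)
  qed
  also have "\<dots> = (cmod (Complex (fst p) (fst (snd p)) - Complex (fst p') (fst (snd p'))))\<^sup>2
       + Gs F' (Complex (fst p) (fst (snd p))) (Complex (fst p') (fst (snd p')))"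
    unfolding hcoord_def Gs_def by simp
  finally show ?thesis .
qed


lemma final_ineq:
  fixes u v P Z2 G CC :: real
  assumes u0: "0 \<le> u" and v0: "0 \<le> v" and Z2: "Z2 = u\<^sup>2 + v\<^sup>2" and G0: "0 \<le> G" and CC0: "0 \<le> CC"
    and h1: "\<bar>P\<bar> \<le> CC * (Z2 + G)" and h2: "G \<le> CC * (Z2 + \<bar>P\<bar>)"
  shows "(u + v + sqrt \<bar>P\<bar>) / sqrt (3 * (1 + CC)) \<le> sqrt (Z2 + G)"
    and "sqrt (Z2 + G) \<le> sqrt (3 * (1 + CC)) * (u + v + sqrt \<bar>P\<bar>)"
proof -
  define c where "c = sqrt \<bar>P\<bar>"
  define d where "d = u + v + c"
  define L where "L = sqrt (3 * (1 + CC))"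
  have c0: "0 \<le> c" and c2: "c\<^sup>2 = \<bar>P\<bar>" unfolding c_def by auto
  have d0: "0 \<le> d" unfolding d_def using u0 v0 c0 by simp
  have L1: "1 \<le> L" unfolding L_def using CC0 by simp
  have LL: "L\<^sup>2 = 3 * (1 + CC)" unfolding L_def using CC0 by simp
  have Z20: "0 \<le> Z2" unfolding Z2 by simp
  have dsq: "d\<^sup>2 \<le> 3 * (Z2 + \<bar>P\<bar>)"
  proof -
    have "0 \<le> (u - v)\<^sup>2 + (u - c)\<^sup>2 + (v - c)\<^sup>2" by simp
    then have "d\<^sup>2 \<le> 3 * (u\<^sup>2 + v\<^sup>2 + c\<^sup>2)" unfolding d_def by (simp add: power2_eq_square algebra_simps)
    then show ?thesis unfolding Z2 c2 .
  qed
  have dsq2: "Z2 + \<bar>P\<bar> \<le> d\<^sup>2"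
  proof -
    have "0 \<le> u * v + u * c + v * c" using u0 v0 c0 by simp
    then have "u\<^sup>2 + v\<^sup>2 + c\<^sup>2 \<le> d\<^sup>2" unfolding d_def by (simp add: power2_eq_square algebra_simps)
    then show ?thesis unfolding Z2 c2 .
  qed
  define CZ where "CZ = CC * Z2"
  define CG where "CG = CC * G"
  define CP where "CP = CC * \<bar>P\<bar>"
  have CZ0: "0 \<le> CZ" "0 \<le> CG" "0 \<le> CP" unfolding CZ_def CG_def CP_def using CC0 Z20 G0 by auto
  have h1': "\<bar>P\<bar> \<le> CZ + CG" using h1 unfolding CZ_def CG_def by (simp add: algebra_simps)
  have h2': "G \<le> CZ + CP" using h2 unfolding CZ_def CP_def by (simp add: algebra_simps)
  have A: "d\<^sup>2 \<le> L\<^sup>2 * (Z2 + G)"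
  proof -
    have "L\<^sup>2 * (Z2 + G) = 3 * (Z2 + G + CZ + CG)" unfolding LL CZ_def CG_def by (simp add: algebra_simps)
    moreover have "d\<^sup>2 \<le> 3 * (Z2 + G + CZ + CG)" using dsq h1' CZ0 G0 by (smt (verit))
    ultimately show ?thesis by simp
  qed
  have B: "Z2 + G \<le> L\<^sup>2 * d\<^sup>2"
  proof -
    have "(1 + CC) * (Z2 + \<bar>P\<bar>) \<le> (1 + CC) * d\<^sup>2" by (rule mult_left_mono[OF dsq2]) (use CC0 in simp)
    moreover have "(1 + CC) * (Z2 + \<bar>P\<bar>) = Z2 + \<bar>P\<bar> + CZ + CP" unfolding CZ_def CP_def by (simp add: algebra_simps)
    moreover have "(1 + CC) * d\<^sup>2 \<le> L\<^sup>2 * d\<^sup>2" unfolding LL by (rule mult_right_mono) (use CC0 in simp_all)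
    ultimately show ?thesis using h2' by linarith
  qed
  have "d \<le> L * sqrt (Z2 + G)"
  proof -
    have "d = sqrt (d\<^sup>2)" using d0 by simp
    also have "\<dots> \<le> sqrt (L\<^sup>2 * (Z2 + G))" by (rule real_sqrt_le_mono[OF A])
    also have "\<dots> = L * sqrt (Z2 + G)" using L1 by (simp add: real_sqrt_mult)
    finally show ?thesis .
  qed
  then show "(u + v + sqrt \<bar>P\<bar>) / sqrt (3 * (1 + CC)) \<le> sqrt (Z2 + G)"
    unfolding d_def[symmetric] c_def[symmetric] L_def[symmetric] using L1 by (simp add: divide_le_eq mult.commute)
  have "sqrt (Z2 + G) \<le> sqrt (L\<^sup>2 * d\<^sup>2)" by (rule real_sqrt_le_mono[OF B])
  also have "\<dots> = L * d" using L1 d0 by (simp add: real_sqrt_mult)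
  finally show "sqrt (Z2 + G) \<le> sqrt (3 * (1 + CC)) * (u + v + sqrt \<bar>P\<bar>)"
    unfolding d_def c_def L_def .
qed

theorem corollary5p2:
  fixes F :: "real \<Rightarrow> real" and A :: "heis set"
  assumes "C11_flat_at_0 F"
    and "A \<subseteq> rot_graph F"
    and "compactin (Metric_space.mtopology UNIV dH) A"
  shows "\<exists>n. bilip_embeds_Rn A dH n"
proof -
  obtain F' K0 where Fd: "\<And>t. 0 \<le> t \<Longrightarrow> (F has_real_derivative F' t) (at t within {0..})"
    and FL0: "\<And>s t. 0 \<le> s \<Longrightarrow> 0 \<le> t \<Longrightarrow> \<bar>F' s - F' t\<bar> \<le> K0 * \<bar>s - t\<bar>"
    and F0: "F' 0 = 0"
    using assms(1) unfolding C11_flat_at_0_def by blast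
  define K where "K = max K0 1"
  have K1: "1 \<le> K" unfolding K_def by simp
  have FL: "\<And>s t. 0 \<le> s \<Longrightarrow> 0 \<le> t \<Longrightarrow> \<bar>F' s - F' t\<bar> \<le> K * \<bar>s - t\<bar>"
  proof -
    fix s t :: real assume "0 \<le> s" "0 \<le> t"
    then have "\<bar>F' s - F' t\<bar> \<le> K0 * \<bar>s - t\<bar>" by (rule FL0)
    also have "\<dots> \<le> K * \<bar>s - t\<bar>" unfolding K_def by (rule mult_right_mono) auto
    finally show "\<bar>F' s - F' t\<bar> \<le> K * \<bar>s - t\<bar>" .
  qed
  interpret Fs: Fset F F' K by unfold_locales (use K1 Fd FL F0 in auto)
  define CC where "CC = CCc K"
  have CC0: "0 \<le> CC" unfolding CC_def by (rule Fs.CC_nonneg)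
  define L where "L = sqrt (3 * (1 + CC))"
  have L1: "1 \<le> L" unfolding L_def using CC0 by simp
  have "bilip_embeds_Rn A dH 14"
    unfolding bilip_embeds_Rn_def
  proof (rule exI[of _ L], intro conjI L1, rule exI[of _ "emb F'"], intro conjI ballI allI impI)
    fix a and i :: nat assume "a \<in> A" "14 \<le> i"
    then show "emb F' a i = 0" unfolding emb_def by simp
  next
    fix a b assume a: "a \<in> A" and b: "b \<in> A"
    obtain x y where ax: "a = (x, y, F (sqrt (x\<^sup>2 + y\<^sup>2)))" using a assms(2) unfolding rot_graph_def by blast
    obtain x' y' where bx: "b = (x', y', F (sqrt (x'\<^sup>2 + y'\<^sup>2)))" using b assms(2) unfolding rot_graph_def by blast
    define z w where "z = Complex x y" and "w = Complex x' y'"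
    have dHe: "dH a b = \<bar>x - x'\<bar> + \<bar>y - y'\<bar> + sqrt \<bar>PhiH F z w\<bar>"
      unfolding ax bx dH_def PhiH_def z_def w_def by (simp add: complex_norm algebra_simps diff_divide_distrib)
    have Ee: "(\<Sum>i<14. (emb F' a i - emb F' b i)\<^sup>2) = (\<bar>x - x'\<bar>\<^sup>2 + \<bar>y - y'\<bar>\<^sup>2) + Gs F' z w"
      using emb_sum[of F' a b] unfolding ax bx z_def w_def by (simp add: cmod_power2)
    have g: "\<bar>PhiH F z w\<bar> \<le> CC * ((\<bar>x - x'\<bar>\<^sup>2 + \<bar>y - y'\<bar>\<^sup>2) + Gs F' z w)
       \<and> Gs F' z w \<le> CC * ((\<bar>x - x'\<bar>\<^sup>2 + \<bar>y - y'\<bar>\<^sup>2) + \<bar>PhiH F z w\<bar>)"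
    proof -
      have "(cmod (z - w))\<^sup>2 = \<bar>x - x'\<bar>\<^sup>2 + \<bar>y - y'\<bar>\<^sup>2" unfolding z_def w_def by (simp add: cmod_power2)
      then show ?thesis using Fs.geo_all[of z w] unfolding CC_def by simp
    qed
    have G0: "0 \<le> Gs F' z w" unfolding Gs_def by (simp add: sum_nonneg)
    note fi = final_ineq[OF abs_ge_zero abs_ge_zero refl G0 CC0 conjunct1[OF g] conjunct2[OF g]]
    show "dH a b / L \<le> sqrt (\<Sum>i<14. (emb F' a i - emb F' b i)\<^sup>2)"
      unfolding Ee dHe L_def by (rule fi(1))
    show "sqrt (\<Sum>i<14. (emb F' a i - emb F' b i)\<^sup>2) \<le> L * dH a b"
      unfolding Ee dHe L_def by (rule fi(2))
  qed
  then show ?thesis by blast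
qed


end
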